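(* Let $m,n\geq 1$ be integers and set $k_0:=n$. Then, as an identity of rational functions in $x$, \[ \sum_{k=1}^{n}\binom{n}{k}\frac{(m-x)_k(x-1)_{n-k}}{(x-m)_{m+n-1}k^m} =\sum_{1\leq k_{m-1}\leq\cdots\leq k_1\leq n}\frac{\sum_{j=1}^{k_{m-1}-1}\frac{1}{x+j-m}-\sum_{j=1}^{k_{m-1}}\frac{1}{j}}{k_1k_2\cdots k_{m-1} (x+k_1-2)(x+k_2-3)\cdots(x+k_{m-1}-m)}, \] where for $m=1$ the outer sum is the single term with empty products equal to $1$ and $k_0=n$.
   Context: $(x)_N=x(x+1)\cdots(x+N-1)$ denotes the rising factorial, with $(x)_0=1$. *)

theory Defs
  imports Complex_Main
begin

text \<open>Index tuples for the outer sum: n = k_0 >= k_1 >= ... >= k_(m-1) >= 1,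
  encoded as functions k with k 0 = n and k i = 0 for i >= m.\<close>
definition chains :: "nat \<Rightarrow> nat \<Rightarrow> (nat \<Rightarrow> nat) set" where
  "chains m n = {k. k 0 = n \<and> (\<forall>i. m \<le> i \<longrightarrow> k i = 0)
      \<and> (\<forall>i\<in>{1..<m}. 1 \<le> k i) \<and> (\<forall>i. Suc i < m \<longrightarrow> k (Suc i) \<le> k i)}"

end

theory Submission
  imports Defs
begin

definition LL :: "nat \<Rightarrow> nat \<Rightarrow> real \<Rightarrow> real" where
  "LL m n x = (\<Sum>k=1..n. real (n choose k) * pochhammer (real m - x) k * pochhammer (x - 1) (n - k)
            / (pochhammer (x - real m) (m + n - 1) * real k ^ m))"

definition RR :: "nat \<Rightarrow> nat \<Rightarrow> real \<Rightarrow> real" where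
  "RR m n x = (\<Sum>k\<in>chains m n.
            ((\<Sum>j=1..<k (m - 1). 1 / (x + real j - real m)) - (\<Sum>j=1..k (m - 1). 1 / real j))
            / (\<Prod>i=1..<m. real (k i) * (x + real (k i) - real (i + 1))))"

lemma aux:
  fixes c j e D N y z :: real
  assumes "j \<noteq> 0" "e \<noteq> 0" "D \<noteq> 0" "N \<noteq> 0" "e * D + j * y = N * z"
  shows "c / j + (N * c / e) * y / (D * N) = (N * c / e) * z / (j * D)"
proof -
  have "c * (D * e + j * y) = c * (N * z)" using assms(5) by (simp add: mult.commute)
  then have h: "D * (c * e) + c * (j * y) = N * (c * z)" by (simp add: algebra_simps)
  show ?thesis using assms h by (simp add: field_simps)
qed

lemma aux2: fixes c c' Q j P D N y :: real
  shows "c*Q/(j*P) + c'*(y*Q)/(P*D*N) = (c/j + c'*y/(D*N))*Q/P"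
  by argo

lemma tele:
  fixes m j n :: nat and x :: real
  assumes j: "1 \<le> j" "j \<le> n"
    and nz: "\<forall>i < m + n. x - real (Suc m) + real i \<noteq> 0"
  shows "(\<Sum>k=j..n. real (k choose j) * pochhammer (x - 2) (k - j)
            / (pochhammer (x - real (Suc m)) (m + k) * real k))
       = real (n choose j) * pochhammer (x - 1) (n - j) / (real j * pochhammer (x - real (Suc m)) (m + n))"
  using j(2) nz
proof (induction n rule: dec_induct)
  case base
  then show ?case by simp
next
  case (step n)
  define a where "a = x - (1 + real m)"
  define P where "P = pochhammer a (m + n)"
  define d where "d = n - j"
  define Q where "Q = pochhammer (x - 1) d"
  define c where "c = real (n choose j)"
  define c' where "c' = real (Suc n choose j)"
  have nzs: "\<forall>i < m + n. a + real i \<noteq> 0" using "step.prems" by (auto simp: a_def)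
  have P0: "P \<noteq> 0" unfolding P_def using nzs
    by (auto simp: pochhammer_eq_0_iff)
  have xn: "x + real n - 1 \<noteq> 0" using "step.prems" by (auto dest: spec[of _ "m+n"])
  have PS: "pochhammer a (m + Suc n) = P * (x + real n - 1)"
    by (simp add: P_def pochhammer_Suc a_def)
  have PS': "pochhammer (x - (1 + real m)) (Suc (m + n)) = P * (x + real n - 1)"
    using PS by (simp add: a_def)
  have nd: "n = j + d" "Suc n - j = Suc d" using "step.hyps" by (auto simp: d_def)
  have cc: "c' * (real d + 1) = (real n + 1) * c"
  proof -
    have "(Suc n - j) * (Suc n choose j) = Suc n * (n choose j)"
      using binomial_absorb_comp[of "Suc n" j] by simp
    then have "real (Suc n - j) * real (Suc n choose j) = real (Suc n) * real (n choose j)"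
      by (metis of_nat_mult)
    then show ?thesis using nd by (simp add: c_def c'_def algebra_simps)
  qed
  have IH: "(\<Sum>k=j..n. real (k choose j) * pochhammer (x - 2) (k - j)
            / (pochhammer (x - real (Suc m)) (m + k) * real k)) = c * Q / (real j * P)"
    using "step.IH" "step.prems" less_SucI by (simp add: c_def Q_def P_def a_def d_def)
  have p1: "pochhammer (x - 1) (Suc n - j) = Q * (x - 1 + real d)"
    by (simp add: nd Q_def pochhammer_Suc)
  have p2: "pochhammer (x - 2) (Suc n - j) = (x - 2) * Q"
    by (simp add: nd Q_def pochhammer_rec)
  have jpos: "real j > 0" using j by simp
  have key: "c / real j + c' * (x - 2) / ((x + real n - 1) * (real n + 1))
      = c' * (x - 1 + real d) / (real j * (x + real n - 1))"
  proof -
    have c'e: "c' = (real n + 1) * c / (real d + 1)" using cc by (simp add: field_simps)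
    have d1: "real d + 1 \<noteq> 0" by linarith
    have n1: "real n + 1 \<noteq> 0" by linarith
    have poly: "(real d + 1) * (x + real n - 1) + real j * (x - 2) = (real n + 1) * (x - 1 + real d)"
      unfolding nd(1) by (simp add: algebra_simps)
    show ?thesis unfolding c'e using aux[OF _ d1 xn n1 poly, of c] jpos by simp
  qed
  have "(\<Sum>k=j..Suc n. real (k choose j) * pochhammer (x - 2) (k - j)
            / (pochhammer (x - real (Suc m)) (m + k) * real k))
      = c * Q / (real j * P) + c' * ((x - 2) * Q) / (P * (x + real n - 1) * real (Suc n))"
    using "step.hyps" IH by (simp add: p2 PS' c'_def)
  also have "\<dots> = (c / real j + c' * (x - 2) / ((x + real n - 1) * (real n + 1))) * Q / P"
    using aux2[of c Q "real j" P c' "x - 2" "x + real n - 1" "real n + 1"] by (simp add: add.commute)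
  also have "\<dots> = c' * (x - 1 + real d) / (real j * (x + real n - 1)) * Q / P" by (simp add: key)
  also have "\<dots> = real (Suc n choose j) * pochhammer (x - 1) (Suc n - j) / (real j * pochhammer (x - real (Suc m)) (m + Suc n))"
    using P0 xn jpos by (simp add: p1 PS' c'_def field_simps)
  finally show ?case .
qed

lemma swap_tri:
  fixes f :: "nat \<Rightarrow> nat \<Rightarrow> real"
  shows "(\<Sum>k=1..n. \<Sum>j=1..k. f k j) = (\<Sum>j=1..n. \<Sum>k=j..n. f k j)"
proof (induction n)
  case 0
  then show ?case by simp
next
  case (Suc n)
  have "(\<Sum>j=1..Suc n. \<Sum>k=j..Suc n. f k j) = (\<Sum>j=1..n. \<Sum>k=j..Suc n. f k j) + f (Suc n) (Suc n)"
    by simp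
  also have "(\<Sum>j=1..n. \<Sum>k=j..Suc n. f k j) = (\<Sum>j=1..n. (\<Sum>k=j..n. f k j) + f (Suc n) j)"
    by (intro sum.cong) auto
  also have "\<dots> = (\<Sum>j=1..n. \<Sum>k=j..n. f k j) + (\<Sum>j=1..n. f (Suc n) j)"
    by (simp add: sum.distrib)
  finally show ?case using Suc by simp
qed

lemma poch_shift:
  fixes x :: real
  assumes "1 \<le> k"
  shows "pochhammer (x - 1 - real m) (m + k - 1) * (x + real k - 2) = pochhammer (x - real (Suc m)) (m + k)"
proof -
  have e: "m + k = Suc (m + k - 1)" using assms by simp
  show ?thesis
    by (subst (2) e, subst pochhammer_Suc) (use assms in \<open>simp add: of_nat_diff algebra_simps\<close>)
qed

lemma recL:
  fixes m n :: nat and x :: real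
  assumes nz: "\<forall>i < m + n. x - real (Suc m) + real i \<noteq> 0"
  shows "LL (Suc m) n x = (\<Sum>k=1..n. LL m k (x - 1) / (real k * (x + real k - 2)))"
proof -
  let ?g = "\<lambda>k j. pochhammer (real (Suc m) - x) j / real j ^ m *
     (real (k choose j) * pochhammer (x - 2) (k - j) / (pochhammer (x - real (Suc m)) (m + k) * real k))"
  have inner: "LL m k (x - 1) / (real k * (x + real k - 2)) = (\<Sum>j=1..k. ?g k j)" if k: "k \<in> {1..n}" for k
  proof -
    have ps: "pochhammer (x - 1 - real m) (m + k - 1) * (x + real k - 2) = pochhammer (x - real (Suc m)) (m + k)"
      using k by (intro poch_shift) auto
    show ?thesis unfolding LL_def sum_divide_distrib
    proof (intro sum.cong refl)
      fix j assume "j \<in> {1..k}"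
      have a1: "real m - (x - 1) = real (Suc m) - x" by simp
      have a2: "x - 1 - 1 = x - 2" by simp
      show "real (k choose j) * pochhammer (real m - (x - 1)) j * pochhammer (x - 1 - 1) (k - j) /
          (pochhammer (x - 1 - real m) (m + k - 1) * real j ^ m) / (real k * (x + real k - 2)) = ?g k j"
        unfolding a1 a2 ps[symmetric] by argo
    qed
  qed
  have "(\<Sum>k=1..n. LL m k (x - 1) / (real k * (x + real k - 2))) = (\<Sum>k=1..n. \<Sum>j=1..k. ?g k j)"
    by (intro sum.cong refl inner)
  also have "\<dots> = (\<Sum>j=1..n. \<Sum>k=j..n. ?g k j)" by (rule swap_tri)
  also have "\<dots> = LL (Suc m) n x" unfolding LL_def
  proof (intro sum.cong refl)
    fix j assume j: "j \<in> {1..n}"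
    have "(\<Sum>k=j..n. ?g k j) = pochhammer (real (Suc m) - x) j / real j ^ m *
       (\<Sum>k=j..n. real (k choose j) * pochhammer (x - 2) (k - j) / (pochhammer (x - real (Suc m)) (m + k) * real k))"
      by (simp add: sum_distrib_left)
    also have "\<dots> = pochhammer (real (Suc m) - x) j / real j ^ m *
       (real (n choose j) * pochhammer (x - 1) (n - j) / (real j * pochhammer (x - real (Suc m)) (m + n)))"
      using j nz by (subst tele) auto
    also have "\<dots> = real (n choose j) * pochhammer (real (Suc m) - x) j * pochhammer (x - 1) (n - j) /
            (pochhammer (x - real (Suc m)) (Suc m + n - 1) * real j ^ Suc m)"
      by simp argo
    finally show "(\<Sum>k=j..n. ?g k j) = real (n choose j) * pochhammer (real (Suc m) - x) j * pochhammer (x - 1) (n - j) /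
            (pochhammer (x - real (Suc m)) (Suc m + n - 1) * real j ^ Suc m)" .
  qed
  finally show ?thesis ..
qed

lemma L0:
  fixes y :: real
  assumes "1 \<le> k"
  shows "LL 0 k y = (pochhammer (-1) k - pochhammer (y - 1) k) / pochhammer y (k - 1)"
proof -
  have "pochhammer (-1) k = pochhammer ((real 0 - y) + (y - 1)) k" by simp
  also have "\<dots> = (\<Sum>j\<le>k. real (k choose j) * pochhammer (real 0 - y) j * pochhammer (y - 1) (k - j))"
    by (rule pochhammer_binomial_sum)
  also have "\<dots> = pochhammer (y - 1) k + (\<Sum>j=1..k. real (k choose j) * pochhammer (real 0 - y) j * pochhammer (y - 1) (k - j))"
    by (simp add: atMost_atLeast0 sum.atLeast_Suc_atMost)
  finally have e: "(\<Sum>j=1..k. real (k choose j) * pochhammer (real 0 - y) j * pochhammer (y - 1) (k - j))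
      = pochhammer (-1) k - pochhammer (y - 1) k" by simp
  show ?thesis unfolding LL_def
    by (simp add: e[symmetric] sum_divide_distrib)
qed

lemma hval:
  fixes x :: real
  assumes k: "1 \<le> k" "k \<le> n" and nz: "\<forall>i < n. x - 1 + real i \<noteq> 0"
  shows "LL 0 k (x - 1) / (real k * (x + real k - 2)) = (if k = 1 then -1 else 1 / (x + real k - 2) - 1 / real k)"
proof (cases "k = 1")
  case True
  have "x - 1 \<noteq> 0" using nz k by (auto dest: spec[of _ 0])
  then show ?thesis using True by (simp add: LL_def field_simps)
next
  case False
  then obtain k' where kk: "k = Suc (Suc k')" using k by (cases k; cases "k - 1") auto
  have p1: "pochhammer (-1 :: real) k = 0"
    unfolding kk by (simp add: pochhammer_rec pochhammer_0_left)
  have p2: "pochhammer (x - 1 - 1) k = (x - 2) * pochhammer (x - 1) (k - 1)"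
    unfolding kk by (simp add: pochhammer_rec)
  have p3: "pochhammer (x - 1) (k - 1) \<noteq> 0"
  proof
    assume "pochhammer (x - 1) (k - 1) = 0"
    then obtain i where i: "i < k - 1" "x - 1 = - real i" by (auto simp: pochhammer_eq_0_iff)
    then have "x - 1 + real i = 0" by simp
    moreover have "i < n" using i k by simp
    ultimately show False using nz by auto
  qed
  have x2: "x + real k - 2 \<noteq> 0"
    using nz[rule_format, of "k - 1"] k kk by (auto simp: of_nat_diff)
  have "LL 0 k (x - 1) = -(x - 2)"
  proof -
    have "LL 0 k (x - 1) = (0 - (x - 2) * pochhammer (x - 1) (k - 1)) / pochhammer (x - 1) (k - 1)"
      unfolding L0[OF k(1), of "x - 1"] p1 p2 ..
    then show ?thesis using p3 by simp
  qed
  then show ?thesis using False x2 k by (simp add: field_simps)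
qed

lemma harm:
  fixes x :: real
  assumes "1 \<le> n"
  shows "(\<Sum>k=1..n. (if k = 1 then -1 else 1 / (x + real k - 2) - 1 / real k))
     = (\<Sum>j=1..<n. 1 / (x + real j - 1)) - (\<Sum>j=1..n. 1 / real j)"
  using assms
proof (induction n rule: dec_induct)
  case base
  then show ?case by simp
next
  case (step n)
  then show ?case by (simp add: algebra_simps)
qed

lemma base1:
  fixes x :: real
  assumes "1 \<le> n" and nz: "\<forall>i < n. x - 1 + real i \<noteq> 0"
  shows "LL 1 n x = (\<Sum>j=1..<n. 1 / (x + real j - 1)) - (\<Sum>j=1..n. 1 / real j)"
proof -
  have "LL (Suc 0) n x = (\<Sum>k=1..n. LL 0 k (x - 1) / (real k * (x + real k - 2)))"
    using nz by (intro recL) simp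
  also have "\<dots> = (\<Sum>k=1..n. (if k = 1 then -1 else 1 / (x + real k - 2) - 1 / real k))"
    using nz by (intro sum.cong refl hval) auto
  finally show ?thesis using harm[OF assms(1)] by simp
qed

lemma chain_le:
  assumes "k \<in> chains m n"
  shows "k i \<le> n"
proof (induction i)
  case 0
  then show ?case using assms by (simp add: chains_def)
next
  case (Suc i)
  show ?case
  proof (cases "Suc i < m")
    case True
    then have "k (Suc i) \<le> k i" using assms by (simp add: chains_def)
    then show ?thesis using Suc by simp
  next
    case False
    then show ?thesis using assms by (simp add: chains_def)
  qed
qed

lemma finite_chains: "finite (chains m n)"
proof -
  have "chains m n \<subseteq> (\<lambda>xs i. if i < m then xs ! i else 0) ` {xs. set xs \<subseteq> {..n} \<and> length xs = m}"
  proof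
    fix k assume k: "k \<in> chains m n"
    have "k = (\<lambda>i. if i < m then map k [0..<m] ! i else 0)"
      using k by (auto simp: chains_def)
    moreover have "map k [0..<m] \<in> {xs. set xs \<subseteq> {..n} \<and> length xs = m}"
      using chain_le[OF k] by auto
    ultimately show "k \<in> (\<lambda>xs i. if i < m then xs ! i else 0) ` {xs. set xs \<subseteq> {..n} \<and> length xs = m}"
      by blast
  qed
  moreover have "finite {xs. set xs \<subseteq> {..n::nat} \<and> length xs = m}"
    by (rule finite_lists_length_eq) simp
  ultimately show ?thesis by (rule finite_subset[OF _ finite_imageI])
qed

lemma chains1: "chains (Suc 0) n = {\<lambda>i. if i = 0 then n else 0}"
  by (auto simp: chains_def)

lemma RR1: "RR 1 n x = (\<Sum>j=1..<n. 1 / (x + real j - 1)) - (\<Sum>j=1..n. 1 / real j)"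
  by (simp add: RR_def chains1)

lemma recR:
  fixes m n :: nat and x :: real
  shows "RR (Suc (Suc m)) n x = (\<Sum>k1=1..n. RR (Suc m) k1 (x - 1) / (real k1 * (x + real k1 - 2)))"
proof -
  define tm where "tm = (\<lambda>M y (k::nat\<Rightarrow>nat).
            ((\<Sum>j=1..<k (M - 1). 1 / (y + real j - real M)) - (\<Sum>j=1..k (M - 1). 1 / real j))
            / (\<Prod>i=1..<M. real (k i) * (y + real (k i) - real (i + 1))))"
  define G where "G = (\<lambda>p. tm (Suc m) (x - 1) (snd p) / (real (fst p) * (x + real (fst p) - 2)))"
  define S where "S = Sigma {1..n} (\<lambda>k1. chains (Suc m) k1)"
  define jj where "jj = (\<lambda>p::nat \<times> (nat \<Rightarrow> nat). (\<lambda>i. if i = 0 then n else snd p (i - 1)))"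
  define ii where "ii = (\<lambda>k::nat\<Rightarrow>nat. (k 1, \<lambda>i. k (Suc i)))"
  have "(\<Sum>k1=1..n. RR (Suc m) k1 (x - 1) / (real k1 * (x + real k1 - 2)))
      = (\<Sum>k1\<in>{1..n}. \<Sum>k'\<in>chains (Suc m) k1. G (k1, k'))"
    unfolding RR_def G_def tm_def sum_divide_distrib fst_conv snd_conv ..
  also have "\<dots> = sum G S"
    unfolding S_def by (subst sum.Sigma) (auto simp: finite_chains)
  also have "\<dots> = sum (tm (Suc (Suc m)) x) (chains (Suc (Suc m)) n)"
  proof (rule sum.reindex_bij_witness[where i = ii and j = jj])
    fix a assume a: "a \<in> S"
    obtain k1 k' where ak: "a = (k1, k')" by (cases a)
    have k1: "1 \<le> k1" "k1 \<le> n" and k': "k' \<in> chains (Suc m) k1" using a ak by (auto simp: S_def)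
    show "ii (jj a) = a" using k' ak by (auto simp: ii_def jj_def chains_def)
    show "jj a \<in> chains (Suc (Suc m)) n"
    proof -
      have c0: "k' 0 = k1" and c1: "\<forall>i. Suc m \<le> i \<longrightarrow> k' i = 0"
        and c2: "\<forall>i\<in>{1..<Suc m}. 1 \<le> k' i" and c3: "\<forall>i. Suc i < Suc m \<longrightarrow> k' (Suc i) \<le> k' i"
        using k' by (auto simp: chains_def)
      have A: "\<forall>i. Suc (Suc m) \<le> i \<longrightarrow> jj a i = 0"
      proof (intro allI impI)
        fix i assume "Suc (Suc m) \<le> i"
        then show "jj a i = 0" using c1 by (auto simp: jj_def ak)
      qed
      have B: "\<forall>i\<in>{1..<Suc (Suc m)}. 1 \<le> jj a i"
      proof
        fix i assume i: "i \<in> {1..<Suc (Suc m)}"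
        show "1 \<le> jj a i"
        proof (cases "i = 1")
          case True then show ?thesis using c0 k1 by (simp add: jj_def ak)
        next
          case False then have "i - 1 \<in> {1..<Suc m}" using i by auto
          then show ?thesis using c2 i by (simp add: jj_def ak)
        qed
      qed
      have C: "\<forall>i. Suc i < Suc (Suc m) \<longrightarrow> jj a (Suc i) \<le> jj a i"
      proof (intro allI impI)
        fix i assume i: "Suc i < Suc (Suc m)"
        show "jj a (Suc i) \<le> jj a i"
        proof (cases i)
          case 0 then show ?thesis using c0 k1 by (simp add: jj_def ak)
        next
          case (Suc i') then show ?thesis using c3 i by (simp add: jj_def ak)
        qed
      qed
      show ?thesis unfolding chains_def using A B C by (simp add: jj_def)
    qed
    have pr: "(\<Prod>i=1..<Suc (Suc m). real (jj a i) * (x + real (jj a i) - real (i + 1)))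
        = (real k1 * (x + real k1 - 2)) * (\<Prod>i=1..<Suc m. real (k' i) * ((x - 1) + real (k' i) - real (i + 1)))"
    proof -
      have "(\<Prod>i=1..<Suc (Suc m). real (jj a i) * (x + real (jj a i) - real (i + 1)))
          = (real (jj a 1) * (x + real (jj a 1) - real (1 + 1))) * (\<Prod>i=Suc 1..<Suc (Suc m). real (jj a i) * (x + real (jj a i) - real (i + 1)))"
        by (subst prod.atLeast_Suc_lessThan) auto
      also have "(\<Prod>i=Suc 1..<Suc (Suc m). real (jj a i) * (x + real (jj a i) - real (i + 1)))
          = (\<Prod>i=1..<Suc m. real (jj a (Suc i)) * (x + real (jj a (Suc i)) - real (Suc i + 1)))"
        by (rule prod.shift_bounds_Suc_ivl)
      also have "\<dots> = (\<Prod>i=1..<Suc m. real (k' i) * ((x - 1) + real (k' i) - real (i + 1)))"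
        by (intro prod.cong refl) (simp add: jj_def ak)
      finally show ?thesis using k' by (simp add: jj_def ak chains_def)
    qed
    have nm: "jj a (Suc (Suc m) - 1) = k' (Suc m - 1)" by (simp add: jj_def ak)
    show "tm (Suc (Suc m)) x (jj a) = G a"
      unfolding tm_def G_def pr nm using ak
      by (simp add: algebra_simps divide_divide_eq_left)
  next
    fix b assume b: "b \<in> chains (Suc (Suc m)) n"
    show "jj (ii b) = b" using b by (auto simp: ii_def jj_def chains_def)
    have b1: "1 \<le> b 1" "b 1 \<le> n" using b chain_le[OF b] by (auto simp: chains_def)
    have "(\<lambda>i. b (Suc i)) \<in> chains (Suc m) (b 1)" using b by (auto simp: chains_def)
    then show "ii b \<in> S" using b1 by (simp add: ii_def S_def)
  qed
  also have "\<dots> = RR (Suc (Suc m)) n x" by (simp add: RR_def tm_def)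
  finally show ?thesis ..
qed

lemma mainLR:
  "\<forall>n x. 1 \<le> n \<longrightarrow> (\<forall>i < Suc m + n - 1. x - real (Suc m) + real i \<noteq> 0)
     \<longrightarrow> LL (Suc m) n x = RR (Suc m) n x"
proof (induction m)
  case 0
  show ?case
  proof (intro allI impI)
    fix n :: nat and x :: real
    assume n: "1 \<le> n" and h: "\<forall>i < Suc 0 + n - 1. x - real (Suc 0) + real i \<noteq> 0"
    have h': "\<forall>i < n. x - 1 + real i \<noteq> 0" using h by simp
    show "LL (Suc 0) n x = RR (Suc 0) n x"
      using base1[OF n h'] RR1[of n x] by simp
  qed
next
  case (Suc m)
  show ?case
  proof (intro allI impI)
    fix n :: nat and x :: real
    assume n: "1 \<le> n" and h: "\<forall>i < Suc (Suc m) + n - 1. x - real (Suc (Suc m)) + real i \<noteq> 0"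
    have h1: "\<forall>i < Suc m + n. x - real (Suc (Suc m)) + real i \<noteq> 0" using h by simp
    have "LL (Suc (Suc m)) n x = (\<Sum>k=1..n. LL (Suc m) k (x - 1) / (real k * (x + real k - 2)))"
      by (rule recL[OF h1])
    also have "\<dots> = (\<Sum>k=1..n. RR (Suc m) k (x - 1) / (real k * (x + real k - 2)))"
    proof (intro sum.cong refl)
      fix k assume k: "k \<in> {1..n}"
      have hk: "\<forall>i < Suc m + k - 1. (x - 1) - real (Suc m) + real i \<noteq> 0"
      proof (intro allI impI)
        fix i assume "i < Suc m + k - 1"
        then have "i < Suc (Suc m) + n - 1" using k by auto
        then have "x - real (Suc (Suc m)) + real i \<noteq> 0" using h by blast
        then show "(x - 1) - real (Suc m) + real i \<noteq> 0" by simp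
      qed
      have "LL (Suc m) k (x - 1) = RR (Suc m) k (x - 1)" using Suc.IH k hk by auto
      then show "LL (Suc m) k (x - 1) / (real k * (x + real k - 2)) = RR (Suc m) k (x - 1) / (real k * (x + real k - 2))"
        by simp
    qed
    also have "\<dots> = RR (Suc (Suc m)) n x" by (rule recR[symmetric])
    finally show "LL (Suc (Suc m)) n x = RR (Suc (Suc m)) n x" .
  qed
qed

theorem corollary5p2:
  fixes m n :: nat and x :: real
  assumes "m \<ge> 1" and "n \<ge> 1"
    and "\<forall>i < m + n - 1. x - real m + real i \<noteq> 0"
  shows "(\<Sum>k=1..n. real (n choose k) * pochhammer (real m - x) k * pochhammer (x - 1) (n - k)
            / (pochhammer (x - real m) (m + n - 1) * real k ^ m))
       = (\<Sum>k\<in>chains m n.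
            ((\<Sum>j=1..<k (m - 1). 1 / (x + real j - real m)) - (\<Sum>j=1..k (m - 1). 1 / real j))
            / (\<Prod>i=1..<m. real (k i) * (x + real (k i) - real (i + 1))))"
proof -
  obtain m' where m: "m = Suc m'" using assms(1) by (cases m) auto
  have "LL m n x = RR m n x" using mainLR[of m'] assms m by blast
  then show ?thesis unfolding LL_def RR_def .
qed

end
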